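(* Let $1<n\leq m$ be integers. Then (1) $d(u^{(0)},0)=\binom{\lfloor\frac{m+n}{2}\rfloor+1}{2}+\binom{\lceil\frac{m-n}{2}\rceil+1}{2}$; (2) if moreover $n<m$ and $2\nmid(m-n)$, then $d(u^{(1)},0)=\binom{\lceil\frac{m+n}{2}\rceil+1}{2}+\binom{\lfloor\frac{m-n}{2}\rfloor+1}{2}-\lceil\frac{m+1}{2}\rceil$.
   Context: Elements of $\mathbb{Z}_n$ are identified with representatives in $\{0,\dots,n-1\}$. The dYoke graph $Z_{n,m}$ has vertices $u=(u_0,\dots,u_{m+1})\in\mathbb{Z}_n\times\{-1,0,1\}^m\times\mathbb{Z}_n$ with $\sum u_i\equiv0\pmod n$; $u,v$ adjacent if there is $0\leq i\leq m$ with $u_j=v_j$ for $j\notin\{i,i+1\}$ and either ($u_i=v_i+1$, $u_{i+1}=v_{i+1}-1$) or ($u_i=v_i-1$, $u_{i+1}=v_{i+1}+1$), arithmetic in coordinates $0,m+1$ in $\mathbb{Z}_n$. $d$ is graph distance, $0$ the all-zero vertex. $u^{(0)}$ is the vertex with $u_i=1$ for $1\le i\le m$ and $u_0\equiv-\lfloor\frac{m-n}{2}\rfloor\pmod n$ ($u_{m+1}$ determined by the sum condition). For $n<m$ with $m-n$ odd, $u^{(1)}$ is the vertex with $u_{\lceil(m+1)/2\rceil}=0$, $u_i=1$ for all other $1\le i\le m$, and $u_0\equiv-\lfloor\frac{m-n}{2}\rfloor\pmod n$. *)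

theory Defs
  imports Complex_Main
begin

text \<open>Vertices of the dYoke graph Z_{n,m} are represented as integer lists
  u = [u_0, ..., u_{m+1}] of length m+2, with u_0, u_{m+1} the canonical
  representatives in {0..n-1} of elements of Z_n, u_i in {-1,0,1} for 1 <= i <= m,
  and sum u_i = 0 mod n.\<close>

definition dy_vert :: "nat \<Rightarrow> nat \<Rightarrow> int list \<Rightarrow> bool" where
  "dy_vert n m u \<longleftrightarrow> length u = m + 2
     \<and> 0 \<le> u!0 \<and> u!0 < int n \<and> 0 \<le> u!(m+1) \<and> u!(m+1) < int n
     \<and> (\<forall>i\<in>{1..m}. u!i \<in> {-1,0,1})
     \<and> sum_list u mod int n = 0"

definition dy_eqc :: "nat \<Rightarrow> nat \<Rightarrow> nat \<Rightarrow> int \<Rightarrow> int \<Rightarrow> bool" where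
  "dy_eqc n m k a b \<longleftrightarrow> (if k = 0 \<or> k = m + 1 then a mod int n = b mod int n else a = b)"

definition dy_adj :: "nat \<Rightarrow> nat \<Rightarrow> int list \<Rightarrow> int list \<Rightarrow> bool" where
  "dy_adj n m u v \<longleftrightarrow> dy_vert n m u \<and> dy_vert n m v \<and>
     (\<exists>i\<le>m. (\<forall>j<m+2. j \<noteq> i \<and> j \<noteq> i + 1 \<longrightarrow> u!j = v!j) \<and>
        ((dy_eqc n m i (u!i) (v!i + 1) \<and> dy_eqc n m (i+1) (u!(i+1)) (v!(i+1) - 1)) \<or>
         (dy_eqc n m i (u!i) (v!i - 1) \<and> dy_eqc n m (i+1) (u!(i+1)) (v!(i+1) + 1))))"

definition dy_edges :: "nat \<Rightarrow> nat \<Rightarrow> (int list \<times> int list) set" where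
  "dy_edges n m = {(u, v). dy_adj n m u v}"

definition dy_dist :: "nat \<Rightarrow> nat \<Rightarrow> int list \<Rightarrow> int list \<Rightarrow> nat" where
  "dy_dist n m u v = (LEAST k. (u, v) \<in> dy_edges n m ^^ k)"

definition dy_zero :: "nat \<Rightarrow> int list" where
  "dy_zero m = replicate (m + 2) 0"

definition dy_u0 :: "nat \<Rightarrow> nat \<Rightarrow> int list" where
  "dy_u0 n m = (let a = (- \<lfloor>(real m - real n) / 2\<rfloor>) mod int n
     in [a] @ replicate m 1 @ [(- (a + int m)) mod int n])"

definition dy_u1 :: "nat \<Rightarrow> nat \<Rightarrow> int list" where
  "dy_u1 n m = (let a = (- \<lfloor>(real m - real n) / 2\<rfloor>) mod int n;
                    c = nat \<lceil>(real m + 1) / 2\<rceil>;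
                    mid = map (\<lambda>i. if i = c then 0 else 1) [1..<m+1]
     in [a] @ mid @ [(- (a + sum_list mid)) mod int n])"

end

theory Submission
  imports Defs
begin

definition Sx :: "int list \<Rightarrow> nat \<Rightarrow> int" where
  "Sx u j = (\<Sum>l=1..j. u!l)"

definition Pot :: "nat \<Rightarrow> int list \<Rightarrow> int \<Rightarrow> int" where
  "Pot m u t = (\<Sum>j\<le>m. \<bar>t + Sx u j\<bar>)"

lemma Sx_0[simp]: "Sx u 0 = 0" by (simp add: Sx_def)
lemma Sx_Suc: "Sx u (Suc j) = Sx u j + u!(Suc j)" by (simp add: Sx_def)

lemma Sx_shift:
  assumes "\<forall>l. 1 \<le> l \<and> l \<le> j \<longrightarrow> u!l = w!l + d l"
  shows "Sx u j = Sx w j + (\<Sum>l=1..j. d l)"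
  using assms unfolding Sx_def by (simp add: sum.distrib)

lemma Pot_nonneg: "0 \<le> Pot m u t" unfolding Pot_def by (simp add: sum_nonneg)

lemma adj_sigma:
  assumes "dy_adj n m u w"
  obtains i \<sigma> where "i \<le> m" "\<sigma> = 1 \<or> \<sigma> = -1"
    "\<forall>j<m+2. j \<noteq> i \<and> j \<noteq> i + 1 \<longrightarrow> u!j = w!j"
    "dy_eqc n m i (u!i) (w!i + \<sigma>)" "dy_eqc n m (i+1) (u!(i+1)) (w!(i+1) - \<sigma>)"
proof -
  from assms obtain i where i: "i \<le> m" "\<forall>j<m+2. j \<noteq> i \<and> j \<noteq> i + 1 \<longrightarrow> u!j = w!j"
    "(dy_eqc n m i (u!i) (w!i + 1) \<and> dy_eqc n m (i+1) (u!(i+1)) (w!(i+1) - 1)) \<or>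
         (dy_eqc n m i (u!i) (w!i - 1) \<and> dy_eqc n m (i+1) (u!(i+1)) (w!(i+1) + 1))"
    unfolding dy_adj_def by blast
  from i(3) show ?thesis
  proof
    assume "dy_eqc n m i (u!i) (w!i + 1) \<and> dy_eqc n m (i+1) (u!(i+1)) (w!(i+1) - 1)"
    then show ?thesis using that[of i 1] i by auto
  next
    assume "dy_eqc n m i (u!i) (w!i - 1) \<and> dy_eqc n m (i+1) (u!(i+1)) (w!(i+1) + 1)"
    then show ?thesis using that[of i "-1"] i by auto
  qed
qed

lemma edge_pot:
  assumes adj: "dy_adj n m u w" and m1: "1 \<le> m"
    and t': "t' mod int n = w!0 mod int n"
  shows "\<exists>t. t mod int n = u!0 mod int n \<and> Pot m u t \<le> Pot m w t' + 1"
proof -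
  obtain i \<sigma> where i: "i \<le> m" "\<sigma> = 1 \<or> \<sigma> = -1"
    "\<forall>j<m+2. j \<noteq> i \<and> j \<noteq> i + 1 \<longrightarrow> u!j = w!j"
    "dy_eqc n m i (u!i) (w!i + \<sigma>)" "dy_eqc n m (i+1) (u!(i+1)) (w!(i+1) - \<sigma>)"
    using adj_sigma[OF adj] by blast
  show ?thesis
  proof (cases "i = 0")
    case True
    have u0: "u!0 mod int n = (w!0 + \<sigma>) mod int n" using i(4) True by (simp add: dy_eqc_def)
    have u1: "u!1 = w!1 - \<sigma>" using i(5) True m1 by (simp add: dy_eqc_def)
    have S: "Sx u j = Sx w j + (if 1 \<le> j then -\<sigma> else 0)" if "j \<le> m" for j
    proof -
      have "\<forall>l. 1 \<le> l \<and> l \<le> j \<longrightarrow> u!l = w!l + (if l = 1 then -\<sigma> else 0)"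
        using i(3) True u1 that by auto
      from Sx_shift[OF this] show ?thesis by simp
    qed
    let ?t = "t' + \<sigma>"
    have "?t mod int n = u!0 mod int n" using u0 t' by (metis mod_add_left_eq)
    moreover have "Pot m u ?t \<le> Pot m w t' + 1"
    proof -
      have "\<bar>?t + Sx u j\<bar> \<le> \<bar>t' + Sx w j\<bar> + (if j = 0 then 1 else 0)" if "j \<in> {..m}" for j
        using S[of j] that i(2) by auto
      then have "Pot m u ?t \<le> (\<Sum>j\<le>m. \<bar>t' + Sx w j\<bar> + (if j = 0 then 1 else 0))"
        unfolding Pot_def by (rule sum_mono)
      also have "\<dots> = Pot m w t' + 1" by (simp add: Pot_def sum.distrib)
      finally show ?thesis .
    qed
    ultimately show ?thesis by blast
  next
    case False
    have u0: "u!0 = w!0" using i(3) False by auto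
    have ui: "u!i = w!i + \<sigma>" using i(4) False i(1) by (simp add: dy_eqc_def)
    have S: "Sx u j = Sx w j + (if j = i then \<sigma> else 0)" if "j \<le> m" for j
    proof -
      have "\<forall>l. 1 \<le> l \<and> l \<le> j \<longrightarrow> u!l = w!l + ((if l = i then \<sigma> else 0) + (if l = i+1 then -\<sigma> else 0))"
      proof (intro allI impI)
        fix l assume l: "1 \<le> l \<and> l \<le> j"
        show "u!l = w!l + ((if l = i then \<sigma> else 0) + (if l = i+1 then -\<sigma> else 0))"
        proof (cases "l = i+1")
          case True
          then show ?thesis using i(5) l that by (simp add: dy_eqc_def)
        qed (use ui i(3) l that in auto)
      qed
      from Sx_shift[OF this] show ?thesis using False by (simp add: sum.distrib)
    qed
    have "Pot m u t' \<le> Pot m w t' + 1"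
    proof -
      have "\<bar>t' + Sx u j\<bar> \<le> \<bar>t' + Sx w j\<bar> + (if j = i then 1 else 0)" if "j \<in> {..m}" for j
        using S[of j] that i(2) by auto
      then have "Pot m u t' \<le> (\<Sum>j\<le>m. \<bar>t' + Sx w j\<bar> + (if j = i then 1 else 0))"
        unfolding Pot_def by (rule sum_mono)
      also have "\<dots> = Pot m w t' + 1" using i(1) by (simp add: Pot_def sum.distrib)
      finally show ?thesis .
    qed
    then show ?thesis using u0 t' by auto
  qed
qed

lemma zero_vert: "dy_zero m ! 0 = 0" by (simp add: dy_zero_def)

lemma lower_pot:
  assumes "(u, dy_zero m) \<in> dy_edges n m ^^ k" and "1 \<le> m"
  shows "\<exists>t. t mod int n = u!0 mod int n \<and> Pot m u t \<le> int k"
  using assms(1)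
proof (induction k arbitrary: u)
  case 0
  then have "u = dy_zero m" by simp
  have "Sx (dy_zero m) j = 0" if "j \<le> m" for j
    unfolding Sx_def dy_zero_def using that by (intro sum.neutral) (auto simp del: replicate.simps)
  then have "Pot m u 0 = 0" unfolding Pot_def using \<open>u = dy_zero m\<close> by simp
  then show ?case using \<open>u = dy_zero m\<close> by (intro exI[of _ 0]) (simp add: zero_vert)
next
  case (Suc k)
  then obtain w where w: "(u, w) \<in> dy_edges n m" "(w, dy_zero m) \<in> dy_edges n m ^^ k"
    by (meson relpow_Suc_D2)
  from Suc.IH[OF w(2)] obtain t' where t': "t' mod int n = w!0 mod int n" "Pot m w t' \<le> int k" by blast
  from w(1) have "dy_adj n m u w" by (simp add: dy_edges_def)
  from edge_pot[OF this assms(2) t'(1)] obtain t where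
    "t mod int n = u!0 mod int n" "Pot m u t \<le> Pot m w t' + 1" by blast
  then show ?case using t'(2) by (intro exI[of _ t]) auto
qed

lemma sum_list_upd_int: "k < length xs \<Longrightarrow> sum_list (xs[k := x]) = sum_list xs + x - xs!k"
  for xs :: "int list"
proof (induction xs arbitrary: k)
  case Nil then show ?case by simp
next
  case (Cons a xs) then show ?case by (cases k) auto
qed

lemma sum_list_nth_int: "sum_list (u::int list) = (\<Sum>i<length u. u!i)"
  by (simp add: sum_list_sum_nth atLeast0LessThan)

lemma zero_case:
  assumes v: "dy_vert n m u" and t: "t mod int n = u!0 mod int n" and P: "Pot m u t = 0"
    and n: "1 < n"
  shows "u = dy_zero m"
proof -
  have len: "length u = m + 2" and r0: "0 \<le> u!0" "u!0 < int n"
    and r1: "0 \<le> u!(m+1)" "u!(m+1) < int n" and s: "sum_list u mod int n = 0"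
    using v unfolding dy_vert_def by auto
  have f0: "t + Sx u j = 0" if "j \<le> m" for j
  proof -
    have "\<forall>j\<in>{..m}. \<bar>t + Sx u j\<bar> = 0"
      using P unfolding Pot_def by (subst sum_nonneg_eq_0_iff[symmetric]) auto
    then show ?thesis using that by auto
  qed
  have t0: "t = 0" using f0[of 0] by simp
  have int0: "u!l = 0" if lm: "1 \<le> l" "l \<le> m" for l
  proof -
    obtain l' where l': "l = Suc l'" using lm by (cases l) auto
    have "Sx u (Suc l') = Sx u l' + u!(Suc l')" by (rule Sx_Suc)
    then show ?thesis using f0[of l] f0[of l'] t0 l' lm by simp
  qed
  have u00: "u!0 = 0"
  proof -
    have "u!0 mod int n = 0" using t t0 by simp
    then show ?thesis using r0 by (simp add: mod_pos_pos_trivial)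
  qed
  have "sum_list u = (\<Sum>i<m+2. if i = m+1 then u!(m+1) else 0)"
    unfolding sum_list_nth_int len
  proof (rule sum.cong)
    fix i assume "i \<in> {..<m+2}"
    then show "u!i = (if i = m+1 then u!(m+1) else 0)"
      using int0[of i] u00 by (cases "i = 0") auto
  qed simp
  also have "\<dots> = u!(m+1)" by simp
  finally have "u!(m+1) mod int n = 0" using s by simp
  then have um: "u!(m+1) = 0" using r1 by (simp add: mod_pos_pos_trivial)
  show ?thesis
  proof (rule nth_equalityI)
    show "length u = length (dy_zero m)" using len by (simp add: dy_zero_def)
    fix i assume "i < length u"
    then show "u!i = dy_zero m ! i"
      using int0[of i] u00 um len unfolding dy_zero_def
      by (cases "i = 0"; cases "i = m+1") (auto simp del: replicate.simps)
  qed
qed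

lemma upper_step:
  assumes v: "dy_vert n m u" and t: "t mod int n = u!0 mod int n"
    and P: "Pot m u t = int (Suc k)" and n: "1 < n" and m1: "1 \<le> m"
  shows "\<exists>w t'. dy_adj n m u w \<and> dy_vert n m w \<and> t' mod int n = w!0 mod int n \<and> Pot m w t' = int k"
proof -
  define f where "f j = t + Sx u j" for j
  have len: "length u = m + 2" and r0: "0 \<le> u!0" "u!0 < int n"
    and r1: "0 \<le> u!(m+1)" "u!(m+1) < int n" and s: "sum_list u mod int n = 0"
    and ri: "\<forall>l\<in>{1..m}. u!l \<in> {-1,0,1}"
    using v unfolding dy_vert_def by auto
  define M where "M = Max ((\<lambda>j. \<bar>f j\<bar>) ` {..m})"
  have "M \<in> (\<lambda>j. \<bar>f j\<bar>) ` {..m}" unfolding M_def by (rule Max_in) auto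
  then obtain i where i: "i \<le> m" "\<bar>f i\<bar> = M" by auto
  have Mge: "\<bar>f j\<bar> \<le> \<bar>f i\<bar>" if "j \<le> m" for j
  proof -
    have "\<bar>f j\<bar> \<le> M" unfolding M_def by (rule Max_ge) (auto simp: that)
    then show ?thesis using i(2) by simp
  qed
  have fi1: "1 \<le> \<bar>f i\<bar>"
  proof (rule ccontr)
    assume "\<not> 1 \<le> \<bar>f i\<bar>"
    then have "\<forall>j\<in>{..m}. \<bar>f j\<bar> = 0" using Mge by force
    then have "Pot m u t = 0" unfolding Pot_def f_def by simp
    then show False using P by simp
  qed
  define \<sigma> :: int where "\<sigma> = (if f i > 0 then 1 else -1)"
  have sig: "\<sigma> = 1 \<or> \<sigma> = -1" unfolding \<sigma>_def by auto
  have sfi: "\<sigma> * f i = \<bar>f i\<bar>" unfolding \<sigma>_def by auto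
  have sfj: "\<sigma> * f j \<le> \<sigma> * f i" if "j \<le> m" for j
    using Mge[OF that] sfi sig by auto
  have uf: "u!(Suc l) = f (Suc l) - f l" for l
    unfolding f_def using Sx_Suc[of u l] by simp
  have ui_ok: "u!i - \<sigma> \<in> {-1,0,1}" if i1: "1 \<le> i"
  proof -
    obtain l where l: "i = Suc l" using i1 by (cases i) auto
    have "\<sigma> * u!i \<ge> 0" using uf[of l] sfj[of l] l i(1) by (simp add: right_diff_distrib)
    moreover have "u!i \<in> {-1,0,1}" using ri i1 i(1) by auto
    ultimately show ?thesis using sig by auto
  qed
  have ui1_ok: "u!(i+1) + \<sigma> \<in> {-1,0,1}" if "i + 1 \<le> m"
  proof -
    have "\<sigma> * u!(i+1) \<le> 0" using uf[of i] sfj[of "i+1"] that by (simp add: right_diff_distrib)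
    moreover have "u!(i+1) \<in> {-1,0,1}" using ri that by auto
    ultimately show ?thesis using sig by auto
  qed
  define a' where "a' = (if i = 0 then (u!0 - \<sigma>) mod int n else u!i - \<sigma>)"
  define b' where "b' = (if i = m then (u!(m+1) + \<sigma>) mod int n else u!(i+1) + \<sigma>)"
  define w where "w = u[i := a', i+1 := b']"
  have lenw: "length w = m + 2" unfolding w_def using len by simp
  have wi: "w!i = a'" unfolding w_def using len i(1) by simp
  have wi1: "w!(i+1) = b'" unfolding w_def using len i(1) by simp
  have wj: "w!j = u!j" if "j \<noteq> i" "j \<noteq> i+1" for j
    unfolding w_def using that by simp
  have da: "int n dvd (a' - u!i + \<sigma>)"
  proof (cases "i = 0")
    case True
    have "int n dvd ((u!0 - \<sigma>) mod int n - (u!0 - \<sigma>))" by (simp add: mod_0_imp_dvd mod_diff_left_eq)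
    then show ?thesis using True unfolding a'_def by (simp add: algebra_simps)
  qed (simp add: a'_def)
  have db: "int n dvd (b' - u!(i+1) - \<sigma>)"
  proof (cases "i = m")
    case True
    have "int n dvd ((u!(m+1) + \<sigma>) mod int n - (u!(m+1) + \<sigma>))" by (simp add: mod_0_imp_dvd mod_diff_left_eq)
    then show ?thesis using True unfolding b'_def by (simp add: algebra_simps)
  qed (simp add: b'_def)
  have sw: "sum_list w = sum_list u + (a' - u!i + \<sigma>) + (b' - u!(i+1) - \<sigma>)"
    unfolding w_def using len i(1) by (simp add: sum_list_upd_int)
  have vw: "dy_vert n m w"
    unfolding dy_vert_def
  proof (intro conjI ballI)
    show "length w = m + 2" by (rule lenw)
    show "0 \<le> w!0" "w!0 < int n"
      using r0 wi wj[of 0] n by (cases "i = 0"; simp add: a'_def)+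
    show "0 \<le> w!(m+1)" "w!(m+1) < int n"
      using r1 wi1 wj[of "m+1"] n i(1) by (cases "i = m"; simp add: b'_def)+
    fix l assume l: "l \<in> {1..m}"
    show "w!l \<in> {-1,0,1}"
    proof (cases "l = i")
      case True then show ?thesis using wi ui_ok l by (auto simp: a'_def)
    next
      case False
      show ?thesis
      proof (cases "l = i+1")
        case True then show ?thesis using wi1 ui1_ok l by (auto simp: b'_def)
      qed (use False wj ri l in auto)
    qed
  next
    have "sum_list w - sum_list u = (a' - u!i + \<sigma>) + (b' - u!(i+1) - \<sigma>)" using sw by simp
    then have "int n dvd (sum_list w - sum_list u)" using da db by (metis dvd_add)
    then show "sum_list w mod int n = 0" using s by (metis mod_eq_dvd_iff)
  qed
  have e1: "dy_eqc n m i (u!i) (w!i + \<sigma>)"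
  proof (cases "i = 0")
    case True then show ?thesis using wi unfolding dy_eqc_def a'_def by (simp add: mod_add_left_eq)
  qed (use wi i(1) in \<open>simp add: dy_eqc_def a'_def\<close>)
  have e2: "dy_eqc n m (i+1) (u!(i+1)) (w!(i+1) - \<sigma>)"
  proof (cases "i = m")
    case True then show ?thesis using wi1 unfolding dy_eqc_def b'_def by (simp add: mod_diff_left_eq)
  qed (use wi1 i(1) in \<open>simp add: dy_eqc_def b'_def\<close>)
  have adj: "dy_adj n m u w"
    unfolding dy_adj_def
  proof (intro conjI exI[of _ i])
    show "dy_vert n m u" "dy_vert n m w" "i \<le> m" by (fact v, fact vw, fact i(1))
    show "\<forall>j<m+2. j \<noteq> i \<and> j \<noteq> i + 1 \<longrightarrow> u!j = w!j" using wj by auto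
    show "dy_eqc n m i (u!i) (w!i + 1) \<and> dy_eqc n m (i+1) (u!(i+1)) (w!(i+1) - 1) \<or>
         dy_eqc n m i (u!i) (w!i - 1) \<and> dy_eqc n m (i+1) (u!(i+1)) (w!(i+1) + 1)"
      using e1 e2 sig by auto
  qed
  define t' where "t' = (if i = 0 then t - \<sigma> else t)"
  have t'w: "t' mod int n = w!0 mod int n"
  proof (cases "i = 0")
    case True
    have "(t - \<sigma>) mod int n = (t mod int n - \<sigma>) mod int n" by (simp add: mod_diff_left_eq)
    also have "\<dots> = (u!0 mod int n - \<sigma>) mod int n" using t by simp
    also have "\<dots> = (u!0 - \<sigma>) mod int n" by (simp add: mod_diff_left_eq)
    finally have "(t - \<sigma>) mod int n = (u!0 - \<sigma>) mod int n" .
    then show ?thesis using wi True unfolding t'_def a'_def by simp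
  next
    case False then show ?thesis using wj[of 0] t unfolding t'_def by simp
  qed
  have fw: "t' + Sx w j = f j - (if j = i then \<sigma> else 0)" if jm: "j \<le> m" for j
  proof (cases "i = 0")
    case i0: True
    have "\<forall>l. 1 \<le> l \<and> l \<le> j \<longrightarrow> w!l = u!l + (if l = 1 then \<sigma> else 0)"
    proof (intro allI impI)
      fix l assume l: "1 \<le> l \<and> l \<le> j"
      show "w!l = u!l + (if l = 1 then \<sigma> else 0)"
      proof (cases "l = 1")
        case True
        have "b' = u!1 + \<sigma>" unfolding b'_def using i0 m1 by simp
        then show ?thesis using wi1 i0 True by simp
      next
        case False
        then have "w!l = u!l" using wj[of l] i0 l by simp
        then show ?thesis using False by simp
      qed
    qed
    from Sx_shift[OF this] have "Sx w j = Sx u j + (\<Sum>l = 1..j. if l = 1 then \<sigma> else 0)" .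
    also have "(\<Sum>l = 1..j. if l = 1 then \<sigma> else 0) = (if 1 \<le> j then \<sigma> else 0)"
      by (simp add: sum.delta)
    finally show ?thesis using i0 unfolding t'_def f_def by simp
  next
    case i0: False
    have "\<forall>l. 1 \<le> l \<and> l \<le> j \<longrightarrow> w!l = u!l + ((if l = i then -\<sigma> else 0) + (if l = i+1 then \<sigma> else 0))"
    proof (intro allI impI)
      fix l assume l: "1 \<le> l \<and> l \<le> j"
      show "w!l = u!l + ((if l = i then -\<sigma> else 0) + (if l = i+1 then \<sigma> else 0))"
      proof (cases "l = i+1")
        case True
        have "i \<noteq> m" using True l jm by simp
        then have "b' = u!(i+1) + \<sigma>" unfolding b'_def by simp
        then show ?thesis using wi1 True by simp
      next
        case False
        show ?thesis
        proof (cases "l = i")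
          case True
          have "a' = u!i - \<sigma>" unfolding a'_def using i0 by simp
          then show ?thesis using wi True by simp
        next
          case False2: False
          then have "w!l = u!l" using wj[of l] False by simp
          then show ?thesis using False False2 by simp
        qed
      qed
    qed
    from Sx_shift[OF this] have "Sx w j = Sx u j + (\<Sum>l = 1..j. (if l = i then -\<sigma> else 0) + (if l = i+1 then \<sigma> else 0))" .
    also have "(\<Sum>l = 1..j. (if l = i then -\<sigma> else 0) + (if l = i+1 then \<sigma> else 0)) = (if j = i then -\<sigma> else 0)"
      using i0 by (simp add: sum.distrib sum.delta)
    finally show ?thesis using i0 unfolding t'_def f_def by simp
  qed
  have absi: "\<bar>f i - \<sigma>\<bar> = \<bar>f i\<bar> - 1"
    using sig sfi fi1 by (elim disjE) (simp_all add: abs_if)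
  have "Pot m w t' = (\<Sum>j\<le>m. \<bar>f j\<bar> - (if j = i then 1 else 0))"
    unfolding Pot_def
  proof (rule sum.cong)
    fix j assume j: "j \<in> {..m}"
    show "\<bar>t' + Sx w j\<bar> = \<bar>f j\<bar> - (if j = i then 1 else 0)"
    proof (cases "j = i")
      case True then show ?thesis using fw[of j] j absi by simp
    next
      case False then show ?thesis using fw[of j] j by simp
    qed
  qed simp
  also have "\<dots> = Pot m u t - 1" using i(1) unfolding Pot_def f_def by (simp add: sum_subtractf)
  finally have "Pot m w t' = int k" using P by simp
  then show ?thesis using adj vw t'w by blast
qed

lemma upper_pot:
  assumes n: "1 < n" and m1: "1 \<le> m"
  shows "\<forall>u t. dy_vert n m u \<longrightarrow> t mod int n = u!0 mod int n \<longrightarrow> Pot m u t = int k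
     \<longrightarrow> (u, dy_zero m) \<in> dy_edges n m ^^ k"
proof (induction k)
  case 0
  then show ?case using zero_case[OF _ _ _ n] by auto
next
  case (Suc k)
  show ?case
  proof (intro allI impI)
    fix u t assume h: "dy_vert n m u" "t mod int n = u!0 mod int n" "Pot m u t = int (Suc k)"
    from upper_step[OF h n m1] obtain w t' where
      w: "dy_adj n m u w" "dy_vert n m w" "t' mod int n = w!0 mod int n" "Pot m w t' = int k" by blast
    then have "(w, dy_zero m) \<in> dy_edges n m ^^ k" using Suc.IH by blast
    moreover have "(u, w) \<in> dy_edges n m" using w(1) by (simp add: dy_edges_def)
    ultimately show "(u, dy_zero m) \<in> dy_edges n m ^^ Suc k" by (meson relpow_Suc_I2)
  qed
qed

lemma dist_eq:
  assumes n: "1 < n" and m1: "1 \<le> m" and v: "dy_vert n m u"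
    and t0: "t0 mod int n = u!0 mod int n"
    and mn: "\<And>t. t mod int n = u!0 mod int n \<Longrightarrow> Pot m u t0 \<le> Pot m u t"
  shows "int (dy_dist n m u (dy_zero m)) = Pot m u t0"
proof -
  let ?k = "nat (Pot m u t0)"
  have k: "Pot m u t0 = int ?k" using Pot_nonneg by simp
  have ex: "(u, dy_zero m) \<in> dy_edges n m ^^ ?k" using upper_pot[OF n m1] v t0 k by blast
  have le: "dy_dist n m u (dy_zero m) \<le> ?k"
    unfolding dy_dist_def by (rule Least_le) (rule ex)
  have "(u, dy_zero m) \<in> dy_edges n m ^^ dy_dist n m u (dy_zero m)"
    unfolding dy_dist_def by (rule LeastI) (rule ex)
  from lower_pot[OF this m1] obtain t where
    "t mod int n = u!0 mod int n" "Pot m u t \<le> int (dy_dist n m u (dy_zero m))" by blast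
  with mn have "Pot m u t0 \<le> int (dy_dist n m u (dy_zero m))" by force
  with le k show ?thesis by linarith
qed

definition g :: "nat \<Rightarrow> int \<Rightarrow> int" where
  "g m t = (\<Sum>j\<le>m. \<bar>t + int j\<bar>)"

lemma g_Suc1: "g (Suc m) t = g m t + \<bar>t + int m + 1\<bar>"
  unfolding g_def by (simp add: add.assoc)

lemma g_Suc2: "g (Suc m) t = \<bar>t\<bar> + g m (t + 1)"
  unfolding g_def by (subst sum.atMost_Suc_shift) (simp add: add.assoc add.commute add.left_commute)

lemma g_step: "g m (t + 1) = g m t + \<bar>t + int m + 1\<bar> - \<bar>t\<bar>"
  using g_Suc1[of m t] g_Suc2[of m t] by simp

lemma g_closed:
  "t \<le> 0 \<Longrightarrow> 0 \<le> int m + t \<Longrightarrow> 2 * g m t = t * (t - 1) + (int m + t) * (int m + t + 1)"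
proof (induction m arbitrary: t)
  case 0
  then have "t = 0" by simp
  then show ?case by (simp add: g_def)
next
  case (Suc m)
  show ?case
  proof (cases "t = 0")
    case True
    have "2 * g m 0 = int m * (int m + 1)" using Suc.IH[of 0] by simp
    then show ?thesis using True g_Suc1[of m 0] by (simp add: algebra_simps)
  next
    case False
    then have "t + 1 \<le> 0" "0 \<le> int m + (t + 1)" using Suc.prems by auto
    from Suc.IH[OF this] have "2 * g m (t+1) = (t+1) * t + (int m + t + 1) * (int m + t + 2)"
      by (simp add: algebra_simps)
    then show ?thesis using g_Suc2[of m t] \<open>t + 1 \<le> 0\<close> by (simp add: algebra_simps)
  qed
qed

lemma g_mono_up: "0 \<le> 2 * t + int m + 1 \<Longrightarrow> g m t \<le> g m (t + int d)"
proof (induction d)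
  case 0 then show ?case by simp
next
  case (Suc d)
  have "g m (t + int d + 1) = g m (t + int d) + \<bar>t + int d + int m + 1\<bar> - \<bar>t + int d\<bar>"
    by (rule g_step)
  moreover have "\<bar>t + int d\<bar> \<le> \<bar>t + int d + int m + 1\<bar>" using Suc.prems by arith
  moreover have eq: "t + int (Suc d) = t + int d + 1" by simp
  ultimately show ?case using Suc unfolding eq by linarith
qed

lemma g_mono_down: "2 * t + int m \<le> 1 \<Longrightarrow> g m t \<le> g m (t - int d)"
proof (induction d)
  case 0 then show ?case by simp
next
  case (Suc d)
  have ih: "g m t \<le> g m (t - int d)" using Suc by blast
  have st: "g m (t - int d) = g m (t - int d - 1) + \<bar>t - int d - 1 + int m + 1\<bar> - \<bar>t - int d - 1\<bar>"
    using g_step[of m "t - int d - 1"] by simp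
  have ab: "\<bar>t - int d - 1 + int m + 1\<bar> \<le> \<bar>t - int d - 1\<bar>" using Suc.prems by arith
  have eq: "t - int (Suc d) = t - int d - 1" by simp
  show ?case unfolding eq using ih st ab by linarith
qed

lemma floor_half: "\<lfloor>real k / 2\<rfloor> = int (k div 2)"
  using floor_divide_of_nat_eq[of k 2] by simp

lemma ceil_half: "\<lceil>real k / 2\<rceil> = int ((k + 1) div 2)"
proof (rule ceiling_unique)
  show "real_of_int (int ((k + 1) div 2)) - 1 < real k / 2"
    by (cases "even k") (auto elim!: evenE oddE)
  show "real k / 2 \<le> real_of_int (int ((k + 1) div 2))"
    by (cases "even k") (auto elim!: evenE oddE)
qed

lemma choose2: "2 * int ((x + 1) choose 2) = int x * (int x + 1)"
proof -
  have "even ((x + 1) * x)" by simp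
  then have "2 * ((x + 1) * x div 2) = (x + 1) * x" by simp
  then have "2 * ((x + 1) choose 2) = (x + 1) * x" by (simp add: choose_two)
  then have "int (2 * ((x + 1) choose 2)) = int ((x + 1) * x)" by simp
  then show ?thesis by (simp add: algebra_simps)
qed

lemma resid:
  assumes "t mod int n = (- s) mod int n" "0 < n"
  shows "t \<ge> - s \<or> t \<le> - s - int n"
proof -
  have "int n dvd (t - (- s))" using assms(1) by (simp add: mod_eq_dvd_iff)
  then obtain q where q: "t + s = int n * q" by (auto elim!: dvdE)
  show ?thesis
  proof (cases "q \<ge> 0")
    case True
    then have "int n * q \<ge> 0" by simp
    then show ?thesis using q by linarith
  next
    case False
    then have "q \<le> -1" by simp
    then have "int n * q \<le> int n * (-1)" by (intro mult_left_mono) auto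
    then show ?thesis using q by linarith
  qed
qed

lemma u0_nth: "1 \<le> l \<Longrightarrow> l \<le> m \<Longrightarrow> dy_u0 n m ! l = 1"
  unfolding dy_u0_def Let_def by (cases l) (auto simp: nth_append)

lemma u0_0: "dy_u0 n m ! 0 = (- \<lfloor>(real m - real n) / 2\<rfloor>) mod int n"
  unfolding dy_u0_def Let_def by simp

lemma modz: "(a + (x + (- a - x) mod (k::int))) mod k = 0"
proof -
  have "(a + x + (-a - x) mod k) mod k = (a + x + (-a-x)) mod k" by (rule mod_add_right_eq)
  then show ?thesis by (simp add: add.assoc)
qed

lemma u0_vert: "1 < n \<Longrightarrow> dy_vert n m (dy_u0 n m)"
  unfolding dy_vert_def dy_u0_def Let_def
  by (auto simp: nth_append sum_list_replicate modz)

lemma u0_Pot: "Pot m (dy_u0 n m) t = g m t"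
proof -
  have "Sx (dy_u0 n m) j = int j" if "j \<le> m" for j
  proof -
    have "Sx (dy_u0 n m) j = (\<Sum>l=1..j. 1)" unfolding Sx_def
      by (rule sum.cong) (use that u0_nth in auto)
    then show ?thesis by simp
  qed
  then show ?thesis unfolding Pot_def g_def by simp
qed

lemma part1:
  fixes n m :: nat
  assumes n1: "1 < n" and nm: "n \<le> m"
  shows "dy_dist n m (dy_u0 n m) (dy_zero m)
           = ((nat \<lfloor>(real m + real n) / 2\<rfloor> + 1) choose 2)
             + ((nat \<lceil>(real m - real n) / 2\<rceil> + 1) choose 2)"
proof -
  define s where "s = (m - n) div 2"
  define s' where "s' = (m + n) div 2"
  define y where "y = m - s'"
  have ss: "s' = s + n" unfolding s_def s'_def using nm by presburger
  have h1: "2 * s + n \<le> m" unfolding s_def using nm by presburger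
  have h2: "m \<le> 2 * s'" unfolding s'_def using n1 by presburger
  have h3: "s' \<le> m" unfolding s'_def using nm by presburger
  have sy: "s \<le> y" unfolding y_def using h1 ss by simp
  have Y: "int y = int m - int s'" unfolding y_def using h3 by simp
  have rd: "real m - real n = real (m - n)" using nm by (simp add: of_nat_diff)
  have fl: "\<lfloor>(real m - real n) / 2\<rfloor> = int s" unfolding rd s_def by (rule floor_half)
  have fl2: "nat \<lfloor>(real m + real n) / 2\<rfloor> = s'"
    using floor_half[of "m + n"] unfolding s'_def by simp
  have cl: "nat \<lceil>(real m - real n) / 2\<rceil> = y"
    unfolding rd ceil_half y_def s'_def using nm by simp
  let ?u = "dy_u0 n m"
  have u00: "?u ! 0 = (- int s) mod int n" using u0_0[of n m] fl by simp
  have t0: "(- int s') mod int n = ?u ! 0 mod int n"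
  proof -
    have "int n dvd (- int s' - (- int s))" using ss by simp
    then show ?thesis using u00 by (simp add: mod_eq_dvd_iff)
  qed
  have gsym: "g m (- int y) = g m (- int s')"
  proof -
    have a: "2 * g m (- int y) = (- int y) * (- int y - 1) + (int m + - int y) * (int m + - int y + 1)"
      by (rule g_closed) (use Y h3 in auto)
    have b: "2 * g m (- int s') = (- int s') * (- int s' - 1) + (int m + - int s') * (int m + - int s' + 1)"
      by (rule g_closed) (use h3 in auto)
    have c: "(- int y) * (- int y - 1) + (int m + - int y) * (int m + - int y + 1)
       = (- int s') * (- int s' - 1) + (int m + - int s') * (int m + - int s' + 1)"
      unfolding Y by (simp add: algebra_simps)
    show ?thesis using a b c by simp
  qed
  have mn: "Pot m ?u (- int s') \<le> Pot m ?u t" if tm: "t mod int n = ?u ! 0 mod int n" for t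
  proof -
    have "t mod int n = (- int s) mod int n" using tm u00 by simp
    from resid[OF this] n1 have "t \<ge> - int s \<or> t \<le> - int s - int n" by simp
    then show ?thesis unfolding u0_Pot
    proof
      assume ts: "t \<ge> - int s"
      define d where "d = nat (t + int s)"
      have td: "t = - int s + int d" unfolding d_def using ts by simp
      have A: "g m (- int s) \<le> g m t" unfolding td by (rule g_mono_up) (use h1 in simp)
      have eq: "- int y + int (y - s) = - int s" using sy by simp
      have B: "g m (- int y) \<le> g m (- int s)"
        using g_mono_up[of "- int y" m "y - s"] Y h2 unfolding eq by simp
      show "g m (- int s') \<le> g m t" using A B gsym by simp
    next
      assume ts: "t \<le> - int s - int n"
      define d where "d = nat (- int s' - t)"
      have td: "t = - int s' - int d" unfolding d_def using ts ss by simp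
      show "g m (- int s') \<le> g m t" unfolding td by (rule g_mono_down) (use h2 in simp)
    qed
  qed
  have D: "int (dy_dist n m ?u (dy_zero m)) = g m (- int s')"
    using dist_eq[OF n1 _ u0_vert[OF n1] t0 mn] nm n1 u0_Pot by simp
  have b: "2 * g m (- int s') = (- int s') * (- int s' - 1) + (int m + - int s') * (int m + - int s' + 1)"
    by (rule g_closed) (use h3 in auto)
  have "2 * int (dy_dist n m ?u (dy_zero m)) = 2 * int ((s' + 1) choose 2) + 2 * int ((y + 1) choose 2)"
    unfolding D b choose2 Y by (simp add: algebra_simps)
  then have "dy_dist n m ?u (dy_zero m) = ((s' + 1) choose 2) + ((y + 1) choose 2)" by simp
  then show ?thesis unfolding fl2 cl .
qed

lemma nth_shape: "k < length mid \<Longrightarrow> ([a] @ mid @ [b]) ! Suc k = mid ! k"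
  by (simp add: nth_append)

lemma u1_nth:
  assumes "1 \<le> l" "l \<le> m"
  shows "dy_u1 n m ! l = (if l = nat \<lceil>(real m + 1) / 2\<rceil> then 0 else 1)"
proof -
  obtain k where k: "l = Suc k" using assms by (cases l) auto
  define c where "c = nat \<lceil>(real m + 1) / 2\<rceil>"
  have "dy_u1 n m ! l = map (\<lambda>i. if i = c then 0 else 1) [1..<m+1] ! k"
    unfolding dy_u1_def Let_def c_def k by (rule nth_shape) (use assms k in simp)
  also have "\<dots> = (if [1..<m+1] ! k = c then 0 else 1)" using assms k by (subst nth_map) (simp_all del: upt_Suc)
  also have "[1..<m+1] ! k = Suc k" using assms k by (simp del: upt_Suc)
  finally show ?thesis unfolding c_def k .
qed

lemma u1_0: "dy_u1 n m ! 0 = (- \<lfloor>(real m - real n) / 2\<rfloor>) mod int n"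
  unfolding dy_u1_def Let_def by simp

lemma u1_vert: "1 < n \<Longrightarrow> dy_vert n m (dy_u1 n m)"
  unfolding dy_vert_def dy_u1_def Let_def
  by (auto simp: nth_append modz)

lemma split_sum:
  "(\<Sum>j\<le>Suc c' + d. \<bar>t + int j - (if Suc c' \<le> j then 1 else 0)\<bar>) = g (c' + d) t + \<bar>t + int c'\<bar>"
proof (induction d)
  case 0
  have "(\<Sum>j\<le>c'. \<bar>t + int j - (if Suc c' \<le> j then 1 else 0)\<bar>) = g c' t"
    unfolding g_def by (rule sum.cong) auto
  then show ?case by simp
next
  case (Suc d)
  have "(\<Sum>j\<le>Suc c' + Suc d. \<bar>t + int j - (if Suc c' \<le> j then 1 else 0)\<bar>)
     = (\<Sum>j\<le>Suc c' + d. \<bar>t + int j - (if Suc c' \<le> j then 1 else 0)\<bar>) + \<bar>t + int (c' + d) + 1\<bar>"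
    by simp
  also have "\<dots> = g (Suc (c' + d)) t + \<bar>t + int c'\<bar>" using Suc g_Suc1[of "c' + d" t] by simp
  finally show ?case by simp
qed

lemma u1_Pot:
  assumes "c = nat \<lceil>(real m + 1) / 2\<rceil>" "c = Suc c'" "c \<le> m"
  shows "Pot m (dy_u1 n m) t = g (m - 1) t + \<bar>t + int c'\<bar>"
proof -
  have "Sx (dy_u1 n m) j = int j - (if c \<le> j then 1 else 0)" if "j \<le> m" for j
  proof -
    have "Sx (dy_u1 n m) j = (\<Sum>l=1..j. 1 - (if l = c then 1 else 0))" unfolding Sx_def
      by (rule sum.cong) (use that u1_nth assms(1) in auto)
    also have "\<dots> = int j - (if c \<le> j then 1 else 0)"
      using assms(2) by (simp add: sum_subtractf sum.delta)
    finally show ?thesis .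
  qed
  note S = this
  have "Pot m (dy_u1 n m) t = (\<Sum>j\<le>m. \<bar>t + int j - (if Suc c' \<le> j then 1 else 0)\<bar>)"
    unfolding Pot_def by (rule sum.cong) (use S assms(2) in auto)
  also have "\<dots> = (\<Sum>j\<le>Suc c' + (m - c). \<bar>t + int j - (if Suc c' \<le> j then 1 else 0)\<bar>)"
    using assms by simp
  also have "\<dots> = g (c' + (m - c)) t + \<bar>t + int c'\<bar>" by (rule split_sum)
  also have "c' + (m - c) = m - 1" using assms by simp
  finally show ?thesis .
qed

lemma part2:
  fixes n m :: nat
  assumes n1: "1 < n" and nm: "n < m" and odd: "odd (m - n)"
  shows "int (dy_dist n m (dy_u1 n m) (dy_zero m))
           = int ((nat \<lceil>(real m + real n) / 2\<rceil> + 1) choose 2)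
             + int ((nat \<lfloor>(real m - real n) / 2\<rfloor> + 1) choose 2)
             - \<lceil>(real m + 1) / 2\<rceil>"
proof -
  define s where "s = (m - n) div 2"
  define s' where "s' = (m + n) div 2"
  define c' where "c' = m div 2"
  define m1 where "m1 = m - 1"
  have ms: "m - n = 2 * s + 1" unfolding s_def using odd by presburger
  have ss: "s' = s + n" unfolding s_def s'_def using nm ms by presburger
  have m1s: "m1 = s + s'" unfolding m1_def using ms ss nm by simp
  have cs': "c' \<le> s'" unfolding c'_def s'_def by presburger
  have sc: "s \<le> c'" unfolding c'_def s_def by presburger
  have m1c: "m1 \<le> 2 * c'" unfolding c'_def m1_def by presburger
  have cm: "Suc c' \<le> m" unfolding c'_def using nm n1 by presburger
  have rd: "real m - real n = real (m - n)" using nm by (simp add: of_nat_diff)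
  have fl: "\<lfloor>(real m - real n) / 2\<rfloor> = int s" unfolding rd s_def by (rule floor_half)
  have fl2: "nat \<lfloor>(real m - real n) / 2\<rfloor> = s" using fl by simp
  have cl2: "nat \<lceil>(real m + real n) / 2\<rceil> = s' + 1"
    using ceil_half[of "m + n"] ms nm unfolding s'_def by simp presburger
  have cc: "\<lceil>(real m + 1) / 2\<rceil> = int (Suc c')"
    using ceil_half[of "m + 1"] unfolding c'_def by (simp add: add.commute)
  have cc2: "nat \<lceil>(real m + 1) / 2\<rceil> = Suc c'" using cc by simp
  let ?u = "dy_u1 n m"
  have P: "Pot m ?u t = g m1 t + \<bar>t + int c'\<bar>" for t
    unfolding m1_def by (rule u1_Pot[OF cc2[symmetric] refl cm])
  have u00: "?u ! 0 = (- int s) mod int n" using u1_0[of n m] fl by simp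
  have t0: "(- int s') mod int n = ?u ! 0 mod int n"
  proof -
    have "int n dvd (- int s' - (- int s))" using ss by simp
    then show ?thesis using u00 by (simp add: mod_eq_dvd_iff)
  qed
  have gsym: "g m1 (- int s) = g m1 (- int s')"
  proof -
    have a: "2 * g m1 (- int s) = (- int s) * (- int s - 1) + (int m1 + - int s) * (int m1 + - int s + 1)"
      by (rule g_closed) (use m1s in auto)
    have b: "2 * g m1 (- int s') = (- int s') * (- int s' - 1) + (int m1 + - int s') * (int m1 + - int s' + 1)"
      by (rule g_closed) (use m1s in auto)
    have c: "(- int s) * (- int s - 1) + (int m1 + - int s) * (int m1 + - int s + 1)
       = (- int s') * (- int s' - 1) + (int m1 + - int s') * (int m1 + - int s' + 1)"
      unfolding m1s by (simp add: algebra_simps)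
    show ?thesis using a b c by simp
  qed
  have mn: "Pot m ?u (- int s') \<le> Pot m ?u t" if tm: "t mod int n = ?u ! 0 mod int n" for t
  proof -
    have v0: "\<bar>- int s' + int c'\<bar> = int s' - int c'" using cs' by simp
    have "t mod int n = (- int s) mod int n" using tm u00 by simp
    from resid[OF this] n1 have "t \<ge> - int s \<or> t \<le> - int s - int n" by simp
    then show ?thesis unfolding P v0
    proof
      assume ts: "t \<ge> - int s"
      define d where "d = nat (t + int s)"
      have td: "t = - int s + int d" unfolding d_def using ts by simp
      have A: "g m1 (- int s) \<le> g m1 t" unfolding td by (rule g_mono_up) (use m1s ss in simp)
      have B: "int s' - int c' \<le> \<bar>t + int c'\<bar>" using ts sc m1c m1s by linarith
      show "g m1 (- int s') + (int s' - int c') \<le> g m1 t + \<bar>t + int c'\<bar>" using A B gsym by simp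
    next
      assume ts: "t \<le> - int s - int n"
      define d where "d = nat (- int s' - t)"
      have td: "t = - int s' - int d" unfolding d_def using ts ss by simp
      have A: "g m1 (- int s') \<le> g m1 t" unfolding td by (rule g_mono_down) (use m1s ss in simp)
      have B: "int s' - int c' \<le> \<bar>t + int c'\<bar>" using ts ss cs' by linarith
      show "g m1 (- int s') + (int s' - int c') \<le> g m1 t + \<bar>t + int c'\<bar>" using A B by simp
    qed
  qed
  have m1': "1 \<le> m" using nm by simp
  have D: "int (dy_dist n m ?u (dy_zero m)) = g m1 (- int s') + (int s' - int c')"
    using dist_eq[OF n1 m1' u1_vert[OF n1] t0 mn] P cs' by simp
  have b: "2 * g m1 (- int s') = (- int s') * (- int s' - 1) + (int m1 + - int s') * (int m1 + - int s' + 1)"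
    by (rule g_closed) (use m1s in auto)
  have e1: "2 * int ((s' + 1 + 1) choose 2) = int (s' + 1) * (int (s' + 1) + 1)" by (rule choose2)
  have e2: "2 * int ((s + 1) choose 2) = int s * (int s + 1)" by (rule choose2)
  have "2 * int (dy_dist n m ?u (dy_zero m)) = 2 * (int ((s' + 1 + 1) choose 2) + int ((s + 1) choose 2) - int (Suc c'))"
    unfolding D right_diff_distrib distrib_left e1 e2 using b m1s by (simp add: algebra_simps)
  then have "int (dy_dist n m ?u (dy_zero m)) = int ((s' + 1 + 1) choose 2) + int ((s + 1) choose 2) - int (Suc c')"
    by simp
  then show ?thesis unfolding cl2 fl2 cc .
qed

theorem lemma5p22:
  fixes n m :: nat
  assumes "1 < n" and "n \<le> m"
  shows "dy_dist n m (dy_u0 n m) (dy_zero m)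
           = ((nat \<lfloor>(real m + real n) / 2\<rfloor> + 1) choose 2)
             + ((nat \<lceil>(real m - real n) / 2\<rceil> + 1) choose 2)
         \<and> (n < m \<and> odd (m - n) \<longrightarrow>
         int (dy_dist n m (dy_u1 n m) (dy_zero m))
           = int ((nat \<lceil>(real m + real n) / 2\<rceil> + 1) choose 2)
             + int ((nat \<lfloor>(real m - real n) / 2\<rfloor> + 1) choose 2)
             - \<lceil>(real m + 1) / 2\<rceil>)"
  using part1[OF assms] part2[OF assms(1)] by blast

end
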